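(* Let $X$ be a normal topological space, and let $f,g\colon X\to Y$ and $f',g'\colon Y\to Z$ be continuous maps. Then $\mathrm{D}(f'\circ f,g'\circ g)\leq \mathrm{D}(f,g)+\mathrm{D}(f',g')$.
   Context: For continuous maps $f,g\colon X\to Y$, the homotopic distance $\mathrm{D}(f,g)$ is the least integer $n\geq 0$ such that there is an open cover $\{U_0,\dots,U_n\}$ of $X$ with $f|_{U_j}\simeq g|_{U_j}$ for all $j$; if no such cover exists, $\mathrm{D}(f,g)=\infty$. *)

theory Defs
  imports "HOL-Analysis.Analysis" "HOL-Library.Extended_Nat"
begin

definition hdist_cover :: "'a topology \<Rightarrow> 'b topology \<Rightarrow> ('a \<Rightarrow> 'b) \<Rightarrow> ('a \<Rightarrow> 'b) \<Rightarrow> nat \<Rightarrow> bool" where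
  "hdist_cover X Y f g n \<longleftrightarrow>
     (\<exists>U :: nat \<Rightarrow> 'a set.
        (\<forall>j\<le>n. openin X (U j)) \<and>
        topspace X \<subseteq> (\<Union>j\<le>n. U j) \<and>
        (\<forall>j\<le>n. homotopic_with (\<lambda>h. True) (subtopology X (U j)) Y f g))"

definition homotopic_distance :: "'a topology \<Rightarrow> 'b topology \<Rightarrow> ('a \<Rightarrow> 'b) \<Rightarrow> ('a \<Rightarrow> 'b) \<Rightarrow> enat" where
  "homotopic_distance X Y f g =
     (if \<exists>n. hdist_cover X Y f g n then enat (LEAST n. hdist_cover X Y f g n) else \<infinity>)"

end

theory Submission
  imports Defs
begin

lemma openin_less:
  assumes "continuous_map X euclideanreal a" "continuous_map X euclideanreal b"
  shows "openin X {x\<in>topspace X. a x < b x}"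
  using openin_continuous_map_preimage[OF continuous_map_diff[OF assms(2) assms(1)], of "{0<..}"]
  by simp

lemma openin_pos:
  assumes "continuous_map X euclideanreal b"
  shows "openin X {x\<in>topspace X. 0 < b x}"
  using openin_less[OF continuous_map_const[THEN iffD2] assms, of 0] by simp

lemma cover_functions:
  fixes n :: nat and U :: "nat \<Rightarrow> 'a set"
  assumes N: "normal_space X" and opn: "\<And>i. i \<le> n \<Longrightarrow> openin X (U i)"
    and cov: "topspace X \<subseteq> (\<Union>i\<le>n. U i)"
  shows "\<exists>\<phi>. (\<forall>i\<le>n. continuous_map X euclideanreal (\<phi> i) \<and>
              (\<forall>x\<in>topspace X. 0 < \<phi> i x \<longrightarrow> x \<in> U i)) \<and>
             (\<forall>x\<in>topspace X. \<exists>i\<le>n. 0 < \<phi> i x)"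
proof -
  have "k \<le> Suc n \<Longrightarrow> \<exists>\<phi>. (\<forall>i<k. continuous_map X euclideanreal (\<phi> i) \<and>
              (\<forall>x\<in>topspace X. 0 < \<phi> i x \<longrightarrow> x \<in> U i)) \<and>
             (\<forall>x\<in>topspace X. (\<exists>i<k. 0 < \<phi> i x) \<or> (\<exists>i. k \<le> i \<and> i \<le> n \<and> x \<in> U i))" for k
  proof (induction k)
    case 0
    show ?case using cov by (rule_tac x="\<lambda>i x. 0" in exI) auto
  next
    case (Suc k)
    then obtain \<phi> where \<phi>1: "\<forall>i<k. continuous_map X euclideanreal (\<phi> i) \<and>
              (\<forall>x\<in>topspace X. 0 < \<phi> i x \<longrightarrow> x \<in> U i)"
      and \<phi>2: "\<forall>x\<in>topspace X. (\<exists>i<k. 0 < \<phi> i x) \<or> (\<exists>i. k \<le> i \<and> i \<le> n \<and> x \<in> U i)"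
      by auto
    have kn: "k \<le> n" using Suc by auto
    define A where "A = (\<Union>i<k. {x\<in>topspace X. \<phi> i x \<in> {0<..}}) \<union> (\<Union>i\<in>{Suc k..n}. U i)"
    have "openin X A" unfolding A_def
      apply (intro openin_Un openin_Union)
      using \<phi>1 opn by (auto intro!: openin_pos)
    then have C: "closedin X (topspace X - A)" by (simp add: closedin_diff)
    have T: "closedin X (topspace X - U k)" using opn kn by (simp add: closedin_diff)
    have dj: "disjnt (topspace X - U k) (topspace X - A)"
    proof -
      have "x \<in> U k" if "x \<in> topspace X" "x \<notin> A" for x
      proof -
        from \<phi>2 that(1) obtain i where "(i<k \<and> 0 < \<phi> i x) \<or> (k \<le> i \<and> i \<le> n \<and> x \<in> U i)" by auto
        then show ?thesis using that(2) unfolding A_def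
          by (metis (no_types, lifting) UN_I Un_iff atLeastAtMost_iff greaterThan_iff le_neq_implies_less lessThan_iff mem_Collect_eq Suc_leI that(1))
      qed
      then show ?thesis by (auto simp: disjnt_def)
    qed
    obtain f where f: "continuous_map X euclideanreal f" "f ` (topspace X - U k) \<subseteq> {0}"
      "f ` (topspace X - A) \<subseteq> {1}"
      using N[unfolded normal_space_iff_Urysohn_alt, rule_format, OF conjI[OF T conjI[OF C dj]]] by blast
    show ?case
    proof (rule exI[of _ "\<phi>(k := f)"], intro conjI ballI allI impI)
      fix i assume "i < Suc k"
      then show "continuous_map X euclideanreal ((\<phi>(k := f)) i)"
        using \<phi>1 f by (cases "i = k") auto
    next
      fix i x assume "i < Suc k" "x \<in> topspace X" "0 < (\<phi>(k := f)) i x"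
      then show "x \<in> U i" using \<phi>1 f
        by (cases "i = k") (force simp: image_subset_iff)+
    next
      fix x assume x: "x \<in> topspace X"
      show "(\<exists>i<Suc k. 0 < (\<phi>(k := f)) i x) \<or> (\<exists>i\<ge>Suc k. i \<le> n \<and> x \<in> U i)"
      proof (cases "x \<in> A")
        case True
        then show ?thesis unfolding A_def by auto
      next
        case False
        then have "f x = 1" using f(3) x by auto
        then show ?thesis by (rule_tac disjI1, rule_tac x=k in exI) auto
      qed
    qed
  qed
  from this[of "Suc n"] obtain \<phi> where
    "\<forall>i\<le>n. continuous_map X euclideanreal (\<phi> i) \<and> (\<forall>x\<in>topspace X. 0 < \<phi> i x \<longrightarrow> x \<in> U i)"
    "\<forall>x\<in>topspace X. (\<exists>i\<le>n. 0 < \<phi> i x) \<or> (\<exists>i\<ge>Suc n. i \<le> n \<and> x \<in> U i)"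
    by (auto simp: less_Suc_eq_le)
  then show ?thesis by (metis not_less_eq_eq)
qed


lemma combine_covers:
  fixes n m :: nat and U V :: "nat \<Rightarrow> 'a set"
  assumes N: "normal_space X"
    and oU: "\<And>i. i \<le> n \<Longrightarrow> openin X (U i)" and cU: "topspace X \<subseteq> (\<Union>i\<le>n. U i)"
    and oV: "\<And>j. j \<le> m \<Longrightarrow> openin X (V j)" and cV: "topspace X \<subseteq> (\<Union>j\<le>m. V j)"
  shows "\<exists>(\<R> :: (nat + nat) set set) Ob lev.
           (\<forall>R\<in>\<R>. openin X (Ob R) \<and> lev R \<le> n + m \<and> (\<exists>i\<le>n. \<exists>j\<le>m. Ob R \<subseteq> U i \<inter> V j)) \<and>
           topspace X \<subseteq> (\<Union>R\<in>\<R>. Ob R) \<and>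
           (\<forall>R\<in>\<R>. \<forall>S\<in>\<R>. R \<noteq> S \<and> lev R = lev S \<longrightarrow> Ob R \<inter> Ob S = {})"
proof -
  obtain \<phi> where \<phi>1: "\<And>i. i\<le>n \<Longrightarrow> continuous_map X euclideanreal (\<phi> i)"
    and \<phi>2: "\<And>i x. i\<le>n \<Longrightarrow> x\<in>topspace X \<Longrightarrow> 0 < \<phi> i x \<Longrightarrow> x \<in> U i"
    and \<phi>3: "\<And>x. x\<in>topspace X \<Longrightarrow> \<exists>i\<le>n. 0 < \<phi> i x"
    using cover_functions[OF N oU cU] by metis
  obtain \<psi> where \<psi>1: "\<And>j. j\<le>m \<Longrightarrow> continuous_map X euclideanreal (\<psi> j)"
    and \<psi>2: "\<And>j x. j\<le>m \<Longrightarrow> x\<in>topspace X \<Longrightarrow> 0 < \<psi> j x \<Longrightarrow> x \<in> V j"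
    and \<psi>3: "\<And>x. x\<in>topspace X \<Longrightarrow> \<exists>j\<le>m. 0 < \<psi> j x"
    using cover_functions[OF N oV cV] by metis
  define h where "h r = (case r of Inl i \<Rightarrow> \<phi> i | Inr j \<Rightarrow> \<psi> j)" for r
  define K where "K = Inl ` {..n} \<union> Inr ` {..m}"
  have finK: "finite K" unfolding K_def by auto
  have cardK: "card K = (n + 1) + (m + 1)"
    unfolding K_def by (subst card_Un_disjoint) (auto simp: card_image)
  have hc: "continuous_map X euclideanreal (h r)" if "r \<in> K" for r
    using that \<phi>1 \<psi>1 unfolding K_def h_def by auto
  define \<R> where "\<R> = {R. R \<subseteq> K \<and> (\<exists>i\<le>n. Inl i \<in> R) \<and> (\<exists>j\<le>m. Inr j \<in> R)}"
  define Ob where "Ob R = {x\<in>topspace X. (\<forall>r\<in>R. 0 < h r x) \<and> (\<forall>r\<in>R. \<forall>r'\<in>K-R. h r' x < h r x)}" for R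
  define lev where "lev R = card R - 2" for R :: "(nat + nat) set"
  have opn: "openin X (Ob R)" if "R \<in> \<R>" for R
  proof -
    have RK: "R \<subseteq> K" using that by (auto simp: \<R>_def)
    have fin: "finite R" "finite (R \<times> (K - R))" using RK finK by (auto intro: finite_subset)
    have "Ob R = ((\<Inter>r\<in>R. {x\<in>topspace X. 0 < h r x}) \<inter> topspace X) \<inter>
                ((\<Inter>p\<in>R \<times> (K - R). {x\<in>topspace X. h (snd p) x < h (fst p) x}) \<inter> topspace X)"
      unfolding Ob_def by auto
    also have "openin X \<dots>"
      apply (rule openin_Int; rule openin_INT)
      using RK fin by (auto intro!: openin_pos openin_less hc)
    finally show ?thesis .
  qed
  have sub: "\<exists>i\<le>n. \<exists>j\<le>m. Ob R \<subseteq> U i \<inter> V j" if "R \<in> \<R>" for R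
  proof -
    obtain i j where ij: "i \<le> n" "Inl i \<in> R" "j \<le> m" "Inr j \<in> R" using \<open>R \<in> \<R>\<close> unfolding \<R>_def by blast
    have "Ob R \<subseteq> U i \<inter> V j"
    proof
      fix x assume "x \<in> Ob R"
      then have "x \<in> topspace X" "0 < \<phi> i x" "0 < \<psi> j x" using ij unfolding Ob_def h_def by auto
      then show "x \<in> U i \<inter> V j" using \<phi>2 \<psi>2 ij by auto
    qed
    then show ?thesis using ij by blast
  qed
  have card2: "2 \<le> card R" if "R \<in> \<R>" for R
  proof -
    obtain i j where ij: "Inl i \<in> R" "Inr j \<in> R" using \<open>R \<in> \<R>\<close> by (auto simp: \<R>_def)
    have "finite R" using that finK by (auto simp: \<R>_def intro: finite_subset)
    moreover have "{Inl i, Inr j} \<subseteq> R" using ij by auto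
    ultimately have "card {Inl i, Inr j} \<le> card R" by (rule card_mono)
    then show ?thesis by simp
  qed
  have levb: "lev R \<le> n + m" if "R \<in> \<R>" for R
  proof -
    have "card R \<le> card K" using that finK by (auto simp: \<R>_def intro: card_mono)
    then show ?thesis using cardK unfolding lev_def by simp
  qed
  have cov: "topspace X \<subseteq> (\<Union>R\<in>\<R>. Ob R)"
  proof
    fix x assume x: "x \<in> topspace X"
    obtain i0 where i0: "i0 \<le> n" "0 < \<phi> i0 x" using \<phi>3 x by blast
    obtain j0 where j0: "j0 \<le> m" "0 < \<psi> j0 x" using \<psi>3 x by blast
    define c where "c = min (\<phi> i0 x) (\<psi> j0 x)"
    have c0: "0 < c" using i0 j0 by (simp add: c_def)
    define R where "R = {r\<in>K. c \<le> h r x}"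
    have "Inl i0 \<in> R" "Inr j0 \<in> R" using i0 j0 by (auto simp: R_def K_def h_def c_def)
    then have "R \<in> \<R>" using i0 j0 by (auto simp: \<R>_def R_def)
    moreover have "x \<in> Ob R" unfolding Ob_def using x c0 by (auto simp: R_def)
    ultimately show "x \<in> (\<Union>R\<in>\<R>. Ob R)" by blast
  qed
  have dis: "Ob R \<inter> Ob S = {}" if "R \<in> \<R>" "S \<in> \<R>" "R \<noteq> S" "lev R = lev S" for R S
  proof (rule ccontr)
    assume "Ob R \<inter> Ob S \<noteq> {}"
    then obtain x where xR: "x \<in> Ob R" and xS: "x \<in> Ob S" by blast
    have RK: "R \<subseteq> K" "S \<subseteq> K" using that by (auto simp: \<R>_def)
    have fin: "finite R" "finite S" using RK finK by (auto intro: finite_subset)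
    have cc: "card R = card S" using that card2 unfolding lev_def
      by (metis le_add_diff_inverse2)
    have "\<not> R \<subseteq> S" using card_subset_eq[OF fin(2)] cc that(3) by metis
    then obtain r where r: "r \<in> R" "r \<notin> S" by blast
    have "\<not> S \<subseteq> R" using card_subset_eq[OF fin(1)] cc that(3) by metis
    then obtain s where s: "s \<in> S" "s \<notin> R" by blast
    have "h s x < h r x" using xR r s RK unfolding Ob_def by blast
    moreover have "h r x < h s x" using xS r s RK unfolding Ob_def by blast
    ultimately show False by simp
  qed
  show ?thesis
    apply (rule exI[of _ \<R>], rule exI[of _ Ob], rule exI[of _ lev])
    using opn levb sub cov dis by blast
qed

lemma homotopic_disjoint_union:
  assumes opn: "\<And>R. R \<in> \<R> \<Longrightarrow> openin X (Ob R)"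
    and dis: "\<And>R S x. R \<in> \<R> \<Longrightarrow> S \<in> \<R> \<Longrightarrow> x \<in> Ob R \<Longrightarrow> x \<in> Ob S \<Longrightarrow> R = S"
    and hom: "\<And>R. R \<in> \<R> \<Longrightarrow> homotopic_with (\<lambda>h. True) (subtopology X (Ob R)) Z p q"
  shows "homotopic_with (\<lambda>h. True) (subtopology X (\<Union>R\<in>\<R>. Ob R)) Z p q"
proof -
  let ?I = "top_of_set {0..1::real}"
  define W where "W = (\<Union>R\<in>\<R>. Ob R)"
  have "\<forall>R\<in>\<R>. \<exists>H. continuous_map (prod_topology ?I (subtopology X (Ob R))) Z H \<and>
       (\<forall>x. H(0, x) = p x) \<and> (\<forall>x. H(1, x) = q x)"
    using hom unfolding homotopic_with_def by blast
  then obtain H where H: "\<And>R. R \<in> \<R> \<Longrightarrow> continuous_map (prod_topology ?I (subtopology X (Ob R))) Z (H R)"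
    "\<And>R x. R \<in> \<R> \<Longrightarrow> H R (0, x) = p x" "\<And>R x. R \<in> \<R> \<Longrightarrow> H R (1, x) = q x"
    by metis
  let ?P = "prod_topology ?I (subtopology X W)"
  have OW: "Ob R \<subseteq> W" if "R \<in> \<R>" for R using that by (auto simp: W_def)
  obtain g where g: "continuous_map ?P Z g"
    "\<And>x R. R \<in> \<R> \<Longrightarrow> x \<in> topspace ?P \<inter> ({0..1} \<times> Ob R) \<Longrightarrow> g x = H R x"
  proof (rule pasting_lemma_exists[where X="?P" and I="\<R>" and T="\<lambda>R. {0..1} \<times> Ob R" and Y=Z and f=H])
    show "topspace ?P \<subseteq> (\<Union>R\<in>\<R>. {0..1} \<times> Ob R)" by (auto simp: W_def)
  next
    fix R assume R: "R \<in> \<R>"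
    have "openin (subtopology X W) (Ob R)"
      using opn[OF R] OW[OF R] by (metis inf.absorb_iff2 openin_subtopology_Int2)
    then show "openin ?P ({0..1} \<times> Ob R)"
      by (simp add: openin_prod_Times_iff)
  next
    fix R assume R: "R \<in> \<R>"
    have "subtopology ?P ({0..1} \<times> Ob R) = prod_topology ?I (subtopology X (Ob R))"
      using OW[OF R] by (simp add: subtopology_Times subtopology_subtopology Int_absorb1)
    then show "continuous_map (subtopology ?P ({0..1} \<times> Ob R)) Z (H R)" using H(1)[OF R] by simp
  next
    fix R S x assume "R \<in> \<R>" "S \<in> \<R>" "x \<in> topspace ?P \<inter> ({0..1} \<times> Ob R) \<inter> ({0..1} \<times> Ob S)"
    then show "H R x = H S x" using dis by auto
  qed auto
  show ?thesis
    unfolding W_def[symmetric]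
  proof (subst homotopic_with, simp, rule exI[of _ g], intro conjI ballI)
    show "continuous_map ?P Z g" by (rule g)
  next
    fix x assume "x \<in> topspace (subtopology X W)"
    then obtain R where R: "R \<in> \<R>" "x \<in> Ob R" "x \<in> topspace X" by (auto simp: W_def)
    then show "g (0, x) = p x" "g (1, x) = q x" using g(2)[of R] H(2,3)[OF R(1)] OW[OF R(1)] by auto
  qed simp
qed

lemma piece_homotopy:
  assumes h1: "homotopic_with (\<lambda>h. True) (subtopology X U) Y f g"
    and h2: "homotopic_with (\<lambda>h. True) (subtopology Y V) Z f' g'"
    and OU: "Ob \<subseteq> U" and OV: "Ob \<subseteq> {x\<in>topspace X. f x \<in> V}"
    and cf: "continuous_map X Y f" and cg': "continuous_map Y Z g'"
  shows "homotopic_with (\<lambda>h. True) (subtopology X Ob) Z (f' \<circ> f) (g' \<circ> g)"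
proof -
  have ci: "continuous_map (subtopology X Ob) (subtopology X U) id"
    using OU by (auto simp: continuous_map_in_subtopology continuous_map_from_subtopology)
  have 1: "homotopic_with (\<lambda>h. True) (subtopology X Ob) Y f g"
    using homotopic_with_compose_continuous_map_right[OF h1 ci] by simp
  have cf2: "continuous_map (subtopology X Ob) (subtopology Y V) f"
    using OV cf by (auto simp: continuous_map_in_subtopology continuous_map_from_subtopology)
  have 2: "homotopic_with (\<lambda>h. True) (subtopology X Ob) Z (f' \<circ> f) (g' \<circ> f)"
    using homotopic_with_compose_continuous_map_right[OF h2 cf2] by simp
  have 3: "homotopic_with (\<lambda>h. True) (subtopology X Ob) Z (g' \<circ> f) (g' \<circ> g)"
    using homotopic_with_compose_continuous_map_left[OF 1 cg'] by simp
  show ?thesis using homotopic_with_trans[OF 2 3] .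
qed


lemma compose_cover:
  assumes N: "normal_space X" and cf: "continuous_map X Y f" and cg': "continuous_map Y Z g'"
    and hn: "hdist_cover X Y f g n" and hm: "hdist_cover Y Z f' g' m"
  shows "hdist_cover X Z (f' \<circ> f) (g' \<circ> g) (n + m)"
proof -
  obtain U where oU: "\<And>i. i \<le> n \<Longrightarrow> openin X (U i)" and cU: "topspace X \<subseteq> (\<Union>i\<le>n. U i)"
    and hU: "\<And>i. i \<le> n \<Longrightarrow> homotopic_with (\<lambda>h. True) (subtopology X (U i)) Y f g"
    using hn unfolding hdist_cover_def by blast
  obtain V where oV: "\<And>j. j \<le> m \<Longrightarrow> openin Y (V j)" and cV: "topspace Y \<subseteq> (\<Union>j\<le>m. V j)"
    and hV: "\<And>j. j \<le> m \<Longrightarrow> homotopic_with (\<lambda>h. True) (subtopology Y (V j)) Z f' g'"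
    using hm unfolding hdist_cover_def by blast
  define V' where "V' j = {x\<in>topspace X. f x \<in> V j}" for j
  have oV': "openin X (V' j)" if "j \<le> m" for j
    unfolding V'_def using openin_continuous_map_preimage[OF cf oV[OF that]] .
  have cV': "topspace X \<subseteq> (\<Union>j\<le>m. V' j)"
  proof
    fix x assume x: "x \<in> topspace X"
    then have "f x \<in> topspace Y" using cf by (simp add: continuous_map_def Pi_iff)
    then obtain j where "j \<le> m" "f x \<in> V j" using cV by blast
    then show "x \<in> (\<Union>j\<le>m. V' j)" using x by (auto simp: V'_def)
  qed
  obtain \<R> :: "(nat + nat) set set" and Ob lev where
    R1: "\<And>R. R\<in>\<R> \<Longrightarrow> openin X (Ob R) \<and> lev R \<le> n + m \<and> (\<exists>i\<le>n. \<exists>j\<le>m. Ob R \<subseteq> U i \<inter> V' j)"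
    and R2: "topspace X \<subseteq> (\<Union>R\<in>\<R>. Ob R)"
    and R3: "\<And>R S. R\<in>\<R> \<Longrightarrow> S\<in>\<R> \<Longrightarrow> R \<noteq> S \<Longrightarrow> lev R = lev S \<Longrightarrow> Ob R \<inter> Ob S = {}"
    using combine_covers[OF N oU cU oV' cV'] by metis
  define W where "W k = (\<Union>R\<in>{R\<in>\<R>. lev R = k}. Ob R)" for k
  show ?thesis unfolding hdist_cover_def
  proof (rule exI[of _ W], intro conjI allI impI)
    fix k assume "k \<le> n + m"
    show "openin X (W k)" unfolding W_def using R1 by (intro openin_Union) auto
  next
    show "topspace X \<subseteq> (\<Union>k\<le>n + m. W k)"
    proof
      fix x assume "x \<in> topspace X"
      then obtain R where "R \<in> \<R>" "x \<in> Ob R" using R2 by blast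
      then show "x \<in> (\<Union>k\<le>n + m. W k)" using R1[of R] unfolding W_def by blast
    qed
  next
    fix k assume "k \<le> n + m"
    show "homotopic_with (\<lambda>h. True) (subtopology X (W k)) Z (f' \<circ> f) (g' \<circ> g)"
      unfolding W_def
    proof (rule homotopic_disjoint_union)
      fix R assume "R \<in> {R \<in> \<R>. lev R = k}"
      then show "openin X (Ob R)" using R1 by blast
    next
      fix R S x assume "R \<in> {R \<in> \<R>. lev R = k}" "S \<in> {R \<in> \<R>. lev R = k}" "x \<in> Ob R" "x \<in> Ob S"
      then show "R = S" using R3[of R S] by (metis (mono_tags, lifting) disjoint_iff mem_Collect_eq)
    next
      fix R assume R: "R \<in> {R \<in> \<R>. lev R = k}"
      then obtain i j where ij: "i \<le> n" "j \<le> m" "Ob R \<subseteq> U i \<inter> V' j" using R1 by blast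
      show "homotopic_with (\<lambda>h. True) (subtopology X (Ob R)) Z (f' \<circ> f) (g' \<circ> g)"
        by (rule piece_homotopy[OF hU[OF ij(1)] hV[OF ij(2)] _ _ cf cg'])
           (use ij in \<open>auto simp: V'_def\<close>)
    qed
  qed
qed

theorem proposition3p19:
  fixes X :: "'a topology" and Y :: "'b topology" and Z :: "'c topology"
    and f g :: "'a \<Rightarrow> 'b" and f' g' :: "'b \<Rightarrow> 'c"
  assumes "normal_space X"
    and "continuous_map X Y f" and "continuous_map X Y g"
    and "continuous_map Y Z f'" and "continuous_map Y Z g'"
  shows "homotopic_distance X Z (f' \<circ> f) (g' \<circ> g)
           \<le> homotopic_distance X Y f g + homotopic_distance Y Z f' g'"
proof (cases "(\<exists>n. hdist_cover X Y f g n) \<and> (\<exists>m. hdist_cover Y Z f' g' m)")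
  case False
  then show ?thesis by (auto simp: homotopic_distance_def)
next
  case True
  define n where "n = (LEAST n. hdist_cover X Y f g n)"
  define m where "m = (LEAST m. hdist_cover Y Z f' g' m)"
  have hn: "hdist_cover X Y f g n" unfolding n_def using True by (metis LeastI_ex)
  have hm: "hdist_cover Y Z f' g' m" unfolding m_def using True by (metis LeastI_ex)
  have hc: "hdist_cover X Z (f' \<circ> f) (g' \<circ> g) (n + m)"
    by (rule compose_cover[OF assms(1,2,5) hn hm])
  have "homotopic_distance X Z (f' \<circ> f) (g' \<circ> g) = enat (LEAST k. hdist_cover X Z (f' \<circ> f) (g' \<circ> g) k)"
    using hc by (auto simp: homotopic_distance_def)
  also have "\<dots> \<le> enat (n + m)" using Least_le[of "hdist_cover X Z (f' \<circ> f) (g' \<circ> g)" "n + m", OF hc] by simp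
  also have "\<dots> = homotopic_distance X Y f g + homotopic_distance Y Z f' g'"
    using True by (simp add: homotopic_distance_def n_def m_def)
  finally show ?thesis .
qed

end
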